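(* Let $U$ be a finite set and $\{X_u\}_{u\in U}$ finite non-empty sets; write $X_V=\prod_{u\in V}X_u$ for $V\subset U$. For every $V\subset U$ let $S_V\subset X_V$. Then for every integer $k\le|U|$, $$\Big|\mathbb E_{x\in X_U}\prod_{\substack{V\subset U\\|V|\le k}}S_V(x_V)-\prod_{\substack{V\subset U\\|V|\le k}}\mathbb E_{x_V\in X_V}S_V(x_V)\Big|\le 2^{|U|}\max_{\substack{V\subset U\\|V|\le k}}\Big\|S_V-\mathbb E_{x_V\in X_V}S_V\Big\|_{\Box^V(X_V)} .$$
   Context: Sets are identified with their indicator functions; $\mathbb E_{x\in X}$ is the uniform average over a finite set $X$. For $x=(x_u)_{u\in U}\in X_U$ and $V\subset U$, $x_V=(x_u)_{u\in V}$; for $V=\emptyset$, $X_\emptyset$ is a one-point set. For a finite index set $V$ and $f:X_V\to\mathbb C$ the Gowers box norm is $$\|f\|_{\Box^V(X_V)}^{2^{|V|}}=\mathbb E_{x^0,x^1\in X_V}\prod_{\omega\in\{0,1\}^V}\mathcal C^{|\omega|}f(x^{\omega}),$$ with $x^{\omega}=(x^{\omega_v}_v)_{v\in V}$, $|\omega|=\sum_v\omega_v$, $\mathcal C$ complex conjugation; when $V=\emptyset$ (so $f$ is a constant) $\|f\|_{\Box^\emptyset}=|f|$. *)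

theory Defs
  imports Complex_Main "HOL-Library.FuncSet" "HOL-Library.Indicator_Function"
begin

definition avg :: "'b set \<Rightarrow> ('b \<Rightarrow> 'c::field) \<Rightarrow> 'c" where
  "avg A f = (\<Sum>x\<in>A. f x) / of_nat (card A)"

text \<open>Points of X_V are extensional functions in PiE V X. The mixed point x^omega.\<close>
definition cube_pt :: "'u set \<Rightarrow> ('u \<Rightarrow> bool) \<Rightarrow> ('u \<Rightarrow> 'a) \<Rightarrow> ('u \<Rightarrow> 'a) \<Rightarrow> ('u \<Rightarrow> 'a)" where
  "cube_pt V \<omega> x0 x1 = (\<lambda>v. if v \<in> V then (if \<omega> v then x1 v else x0 v) else undefined)"

definition conj_pow :: "nat \<Rightarrow> complex \<Rightarrow> complex" where
  "conj_pow n z = (if even n then z else cnj z)"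

definition box_avg :: "'u set \<Rightarrow> ('u \<Rightarrow> 'a set) \<Rightarrow> (('u \<Rightarrow> 'a) \<Rightarrow> complex) \<Rightarrow> complex" where
  "box_avg V X f = avg (PiE V X \<times> PiE V X)
     (\<lambda>(x0, x1). \<Prod>\<omega>\<in>PiE V (\<lambda>_. UNIV :: bool set).
        conj_pow (card {v\<in>V. \<omega> v}) (f (cube_pt V \<omega> x0 x1)))"

text \<open>Box norm. The box average is a nonnegative real for V nonempty; for V empty it is
  f itself, and the convention is the modulus |f|. Taking cmod covers both cases.\<close>
definition box_norm :: "'u set \<Rightarrow> ('u \<Rightarrow> 'a set) \<Rightarrow> (('u \<Rightarrow> 'a) \<Rightarrow> complex) \<Rightarrow> real" where
  "box_norm V X f = cmod (box_avg V X f) powr (1 / 2 ^ card V)"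

end

theory Submission
  imports Defs
begin


lemma CS_sum:
  fixes a :: "'a \<Rightarrow> real"
  shows "(\<Sum>i\<in>I. a i * b i)\<^sup>2 \<le> (\<Sum>i\<in>I. (a i)\<^sup>2) * (\<Sum>i\<in>I. (b i)\<^sup>2)"
proof (cases "(\<Sum>i\<in>I. (b i)\<^sup>2) > 0")
  case False
  then consider "\<And>i. i\<in>I \<Longrightarrow> b i = 0" | "infinite I"
    by (metis (mono_tags, lifting) sum_pos2 zero_le_power2 zero_less_power2)
  thus ?thesis
    by fastforce
next
  case True
  define r where "r \<equiv> (\<Sum>i\<in>I. a i * b i) / (\<Sum>i\<in>I. (b i)\<^sup>2)"
  have "0 \<le> (\<Sum>i\<in>I. (a i - r * b i)\<^sup>2)"
    by (simp add: sum_nonneg)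
  also have "... = (\<Sum>i\<in>I. (a i)\<^sup>2) - 2 * r * (\<Sum>i\<in>I. a i * b i) + r\<^sup>2 * (\<Sum>i\<in>I. (b i)\<^sup>2)"
    by (simp add: algebra_simps power2_eq_square sum_distrib_left flip: sum.distrib)
  also have "\<dots> = (\<Sum>i\<in>I. (a i)\<^sup>2) - ((\<Sum>i\<in>I. a i * b i))\<^sup>2 / (\<Sum>i\<in>I. (b i)\<^sup>2)"
    by (simp add: r_def power2_eq_square)
  finally have "0 \<le> (\<Sum>i\<in>I. (a i)\<^sup>2) - ((\<Sum>i\<in>I. a i * b i))\<^sup>2 / (\<Sum>i\<in>I. (b i)\<^sup>2)" .
  hence "((\<Sum>i\<in>I. a i * b i))\<^sup>2 / (\<Sum>i\<in>I. (b i)\<^sup>2) \<le> (\<Sum>i\<in>I. (a i)\<^sup>2)"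
    by (simp add: le_diff_eq)
  thus "((\<Sum>i\<in>I. a i * b i))\<^sup>2 \<le> (\<Sum>i\<in>I. (a i)\<^sup>2) * (\<Sum>i\<in>I. (b i)\<^sup>2)"
    by (simp add: pos_divide_le_eq True)
qed

lemma avg_CS:
  fixes a b :: "'a \<Rightarrow> real"
  shows "(avg A (\<lambda>i. a i * b i))\<^sup>2 \<le> avg A (\<lambda>i. (a i)\<^sup>2) * avg A (\<lambda>i. (b i)\<^sup>2)"
  using divide_right_mono[OF CS_sum[of a b A], of "(real (card A))^2"]
  by (simp add: avg_def power_divide power2_eq_square)

lemma avg_add: "avg A (\<lambda>x. f x + g x) = avg A f + avg A g"
  by (simp add: avg_def sum.distrib add_divide_distrib)
lemma avg_diff: "avg A (\<lambda>x. f x - g x) = avg A f - avg A g"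
  by (simp add: avg_def sum_subtractf diff_divide_distrib)
lemma avg_cmult: "avg A (\<lambda>x. c * f x) = c * avg A f"
  by (simp add: avg_def sum_distrib_left)
lemma avg_multc: "avg A (\<lambda>x. f x * c) = avg A f * c"
  by (simp add: avg_def sum_distrib_right)
lemma avg_const: "finite A \<Longrightarrow> A \<noteq> {} \<Longrightarrow> avg A (\<lambda>x. c) = (c::real)"
  using card_gt_0_iff[of A] by (simp add: avg_def)
lemma avg_cong: "(\<And>x. x \<in> A \<Longrightarrow> f x = g x) \<Longrightarrow> avg A f = avg A g"
  by (simp add: avg_def cong: sum.cong)
lemma avg_nonneg: "(\<And>x. x \<in> A \<Longrightarrow> (0::real) \<le> f x) \<Longrightarrow> 0 \<le> avg A f"
  by (simp add: avg_def sum_nonneg)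
lemma avg_mono: "(\<And>x. x \<in> A \<Longrightarrow> (f x::real) \<le> g x) \<Longrightarrow> avg A f \<le> avg A g"
  by (simp add: avg_def sum_mono divide_right_mono)
lemma avg_le1: "finite A \<Longrightarrow> (\<And>x. x \<in> A \<Longrightarrow> (f x::real) \<le> 1) \<Longrightarrow> avg A f \<le> 1"
proof -
  assume "finite A" "\<And>x. x \<in> A \<Longrightarrow> (f x::real) \<le> 1"
  hence "avg A f \<le> avg A (\<lambda>_. 1)" by (intro avg_mono) auto
  also have "\<dots> \<le> 1" using \<open>finite A\<close> by (cases "A = {}") (auto simp: avg_def)
  finally show ?thesis .
qed
lemma avg_abs: "\<bar>avg A f\<bar> \<le> avg A (\<lambda>x. \<bar>f x::real\<bar>)"
  by (simp add: avg_def abs_divide divide_right_mono sum_abs)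

lemma avg_Times':
  assumes "finite A" "finite B"
  shows "avg (A \<times> B) (\<lambda>(a,b). f a b) = avg A (\<lambda>a. avg B (f a))"
  using assms
  by (simp add: avg_def sum.cartesian_product[symmetric] card_cartesian_product
      sum_divide_distrib[symmetric] divide_divide_eq_left mult.commute)

lemma avg_swap:
  assumes "finite A" "finite B"
  shows "avg A (\<lambda>a. avg B (f a)) = avg B (\<lambda>b. avg A (\<lambda>a. f a b))"
  using assms by (simp add: avg_def sum_divide_distrib[symmetric] sum.swap[of _ A B])

lemma avg_reindex:
  assumes "bij_betw h A B"
  shows "avg B f = avg A (\<lambda>x. f (h x))"
  using assms by (simp add: avg_def sum.reindex_bij_betw bij_betw_same_card)

lemma avg_square:
  assumes "finite A"
  shows "avg (A \<times> A) (\<lambda>(a,b). P a * P b) = (avg A P)\<^sup>2"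
  using assms by (simp add: avg_Times' avg_cmult avg_multc power2_eq_square)

lemma avg_pow_le:
  fixes t :: "'a \<Rightarrow> real"
  assumes "finite A"
  shows "\<bar>avg A t\<bar> ^ (2^n) \<le> avg A (\<lambda>i. \<bar>t i\<bar> ^ (2^n))"
proof (induction n arbitrary: t)
  case 0 thus ?case using avg_abs by simp
next
  case (Suc n)
  have "(avg A t)\<^sup>2 \<le> avg A (\<lambda>i. (t i)\<^sup>2) * avg A (\<lambda>i. 1\<^sup>2)"
    using avg_CS[of A t "\<lambda>_. 1"] by simp
  also have "\<dots> \<le> avg A (\<lambda>i. (t i)\<^sup>2)"
    using avg_le1[OF assms, of "\<lambda>_. 1\<^sup>2"]
    by (intro mult_left_le avg_nonneg) auto
  finally have 1: "\<bar>avg A t\<bar>^2 \<le> \<bar>avg A (\<lambda>i. (t i)\<^sup>2)\<bar>" by simp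
  have "\<bar>avg A t\<bar> ^ (2^Suc n) = (\<bar>avg A t\<bar>^2) ^ (2^n)"
    by (simp add: power_mult[symmetric] mult.commute power_even_abs)
  also have "\<dots> \<le> \<bar>avg A (\<lambda>i. (t i)\<^sup>2)\<bar> ^ (2^n)"
    using 1 by (intro power_mono) auto
  also have "\<dots> \<le> avg A (\<lambda>i. \<bar>(t i)\<^sup>2\<bar> ^ (2^n))" by (rule Suc)
  also have "\<dots> = avg A (\<lambda>i. \<bar>t i\<bar> ^ (2^Suc n))"
    by (intro avg_cong) (simp add: power_mult[symmetric] power_abs power_even_abs)
  finally show ?case .
qed



definition rbox :: "'u set \<Rightarrow> ('u \<Rightarrow> 'a set) \<Rightarrow> (('u \<Rightarrow> 'a) \<Rightarrow> real) \<Rightarrow> real" where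
  "rbox V X f = avg (PiE V X \<times> PiE V X)
     (\<lambda>(x0, x1). \<Prod>\<omega>\<in>PiE V (\<lambda>_. UNIV :: bool set). f (cube_pt V \<omega> x0 x1))"

lemma bij_ins: "v \<notin> V \<Longrightarrow> bij_betw (\<lambda>(y,g). g(v:=y)) (T v \<times> PiE V T) (PiE (insert v V) T)"
  by (simp add: bij_betw_def inj_combinator PiE_insert_eq)

lemma cube_pt_ins:
  "cube_pt (insert v V) (w(v:=t)) (y0(v:=a)) (y1(v:=b)) = (cube_pt V w y0 y1)(v := (if t then b else a))"
  by (auto simp: cube_pt_def fun_eq_iff)

lemma prod_ins_bool:
  assumes "v \<notin> V" "finite V"
  shows "(\<Prod>\<omega>\<in>PiE (insert v V) (\<lambda>_. UNIV :: bool set). F \<omega>)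
        = (\<Prod>w\<in>PiE V (\<lambda>_. UNIV :: bool set). F (w(v:=False)) * F (w(v:=True)))"
proof -
  have "(\<Prod>\<omega>\<in>PiE (insert v V) (\<lambda>_. UNIV :: bool set). F \<omega>)
      = (\<Prod>p\<in>(UNIV::bool set) \<times> PiE V (\<lambda>_. UNIV :: bool set). F ((\<lambda>(y,g). g(v:=y)) p))"
    using prod.reindex_bij_betw[OF bij_ins[OF assms(1), of "\<lambda>_. UNIV :: bool set"], of F]
    by simp
  also have "\<dots> = (\<Prod>t\<in>(UNIV::bool set). \<Prod>w\<in>PiE V (\<lambda>_. UNIV :: bool set). F (w(v:=t)))"
    by (subst prod.cartesian_product) (simp add: split_def)
  also have "\<dots> = (\<Prod>w\<in>PiE V (\<lambda>_. UNIV :: bool set). F (w(v:=False))) *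
                  (\<Prod>w\<in>PiE V (\<lambda>_. UNIV :: bool set). F (w(v:=True)))"
    by (simp add: UNIV_bool)
  finally show ?thesis by (simp add: prod.distrib)
qed

lemma avg_Times4:
  assumes "finite A" "finite B"
  shows "avg ((A\<times>B)\<times>(A\<times>B)) (\<lambda>((a,y0),(b,y1)). G a b y0 y1)
       = avg A (\<lambda>a. avg B (\<lambda>y0. avg A (\<lambda>b. avg B (\<lambda>y1. G a b y0 y1))))"
proof -
  have fAB: "finite (A \<times> B)" using assms by simp
  have "avg ((A\<times>B)\<times>(A\<times>B)) (\<lambda>((a,y0),(b,y1)). G a b y0 y1)
     = avg ((A\<times>B)\<times>(A\<times>B)) (\<lambda>(p,q). (\<lambda>(a,y0). (\<lambda>(b,y1). G a b y0 y1) q) p)"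
    by (rule avg_cong) auto
  also have "\<dots> = avg (A\<times>B) (\<lambda>p. avg (A\<times>B) (\<lambda>q. (\<lambda>(a,y0). (\<lambda>(b,y1). G a b y0 y1) q) p))"
    by (rule avg_Times'[OF fAB fAB])
  also have "\<dots> = avg (A\<times>B) (\<lambda>(a,y0). avg A (\<lambda>b. avg B (\<lambda>y1. G a b y0 y1)))"
    by (rule avg_cong) (auto simp: avg_Times'[OF assms])
  also have "\<dots> = avg A (\<lambda>a. avg B (\<lambda>y0. avg A (\<lambda>b. avg B (\<lambda>y1. G a b y0 y1))))"
    by (rule avg_Times'[OF assms])
  finally show ?thesis .
qed

lemma rbox_insert:
  fixes X :: "'u \<Rightarrow> 'a set" and V :: "'u set"
  assumes "v \<notin> V" "finite V" "\<And>w. w \<in> insert v V \<Longrightarrow> finite (X w)"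
  shows "rbox (insert v V) X f
     = avg (X v \<times> X v) (\<lambda>(a,b). rbox V X (\<lambda>y. f (y(v:=a)) * f (y(v:=b))))"
proof -
  let ?P = "PiE V X"
  let ?h = "(\<lambda>(y,g). g(v:=y)) :: 'a \<times> ('u \<Rightarrow> 'a) \<Rightarrow> _"
  have fP: "finite ?P" using assms by (intro finite_PiE) auto
  have fX: "finite (X v)" using assms by auto
  define G where "G = (\<lambda>a b y0 y1. \<Prod>w\<in>PiE V (\<lambda>_. UNIV :: bool set).
        f ((cube_pt V w y0 y1)(v:=a)) * f ((cube_pt V w y0 y1)(v:=b)))"
  have bh: "bij_betw (map_prod ?h ?h) ((X v \<times> ?P) \<times> (X v \<times> ?P))
     (PiE (insert v V) X \<times> PiE (insert v V) X)"
    by (intro bij_betw_map_prod bij_ins assms(1))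
  have "rbox (insert v V) X f = avg ((X v \<times> ?P) \<times> (X v \<times> ?P))
      (\<lambda>((a,y0),(b,y1)). G a b y0 y1)"
    unfolding rbox_def
    apply (subst avg_reindex[OF bh])
    apply (rule avg_cong)
    apply (clarsimp simp: prod_ins_bool[OF assms(1,2)] cube_pt_ins G_def)
    done
  also have "\<dots> = avg (X v) (\<lambda>a. avg ?P (\<lambda>y0. avg (X v) (\<lambda>b. avg ?P (\<lambda>y1. G a b y0 y1))))"
    by (rule avg_Times4[OF fX fP])
  also have "\<dots> = avg (X v) (\<lambda>a. avg (X v) (\<lambda>b. avg ?P (\<lambda>y0. avg ?P (\<lambda>y1. G a b y0 y1))))"
    using fP fX by (simp add: avg_swap[of ?P "X v"])
  also have "\<dots> = avg (X v \<times> X v) (\<lambda>(a,b). rbox V X (\<lambda>y. f (y(v:=a)) * f (y(v:=b))))"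
    unfolding rbox_def G_def using fP fX
    by (simp add: avg_Times')
  finally show ?thesis .
qed



lemma avg_sq_nonneg:
  fixes P :: "'a \<Rightarrow> 'q \<Rightarrow> real"
  assumes "finite A" "finite Q"
  shows "0 \<le> avg (A\<times>A) (\<lambda>(a,b). avg Q (\<lambda>q. P a q * P b q))"
proof -
  have "avg (A\<times>A) (\<lambda>(a,b). avg Q (\<lambda>q. P a q * P b q))
      = avg A (\<lambda>a. avg A (\<lambda>b. avg Q (\<lambda>q. P a q * P b q)))"
    by (rule avg_Times'[OF assms(1,1)])
  also have "\<dots> = avg A (\<lambda>a. avg Q (\<lambda>q. avg A (\<lambda>b. P a q * P b q)))"
    using assms by (simp add: avg_swap[of A Q])
  also have "\<dots> = avg Q (\<lambda>q. avg A (\<lambda>a. avg A (\<lambda>b. P a q * P b q)))"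
    using assms by (simp add: avg_swap[of A Q])
  also have "\<dots> = avg Q (\<lambda>q. (avg A (\<lambda>a. P a q))\<^sup>2)"
    using assms by (simp add: avg_square[symmetric] avg_Times')
  also have "\<dots> \<ge> 0" by (intro avg_nonneg) auto
  finally show ?thesis by simp
qed

lemma rbox_nonneg:
  fixes X :: "'u \<Rightarrow> 'a set"
  assumes "finite V" "V \<noteq> {}" "\<And>w. w \<in> V \<Longrightarrow> finite (X w)"
  shows "0 \<le> rbox V X f"
proof -
  obtain v where v: "v \<in> V" using assms(2) by auto
  define V' where "V' = V - {v}"
  have V: "V = insert v V'" "v \<notin> V'" "finite V'" using v assms(1) by (auto simp: V'_def)
  have fP: "finite (PiE V' X)" using assms V by (intro finite_PiE) auto
  have fX: "finite (X v)" using assms v by auto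
  have "rbox V X f = avg (X v \<times> X v) (\<lambda>(a,b). rbox V' X (\<lambda>y. f (y(v:=a)) * f (y(v:=b))))"
    using rbox_insert[OF V(2,3), of X f] assms V(1) by simp
  also have "\<dots> = avg (X v \<times> X v) (\<lambda>(a,b). avg (PiE V' X \<times> PiE V' X) (\<lambda>q.
      (\<lambda>a. \<Prod>\<omega>\<in>PiE V' (\<lambda>_. UNIV :: bool set). f ((cube_pt V' \<omega> (fst q) (snd q))(v:=a))) a *
      (\<lambda>a. \<Prod>\<omega>\<in>PiE V' (\<lambda>_. UNIV :: bool set). f ((cube_pt V' \<omega> (fst q) (snd q))(v:=a))) b))"
    unfolding rbox_def
    by (intro avg_cong) (auto simp: prod.distrib split_def)
  also have "\<dots> \<ge> 0"
    using fP fX by (intro avg_sq_nonneg) auto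
  finally show ?thesis by simp
qed



lemma avg_ins_split:
  fixes X :: "'u \<Rightarrow> 'a set" and Y :: "'b set"
  assumes "v \<notin> V" "finite V" "\<And>w. w \<in> insert v V \<Longrightarrow> finite (X w)" "finite Y"
  shows "avg (PiE (insert v V) X \<times> Y) (\<lambda>(x,y). K x y)
       = avg (PiE V X \<times> Y) (\<lambda>(z,y). avg (X v) (\<lambda>a. K (z(v:=a)) y))"
proof -
  let ?P = "PiE V X"
  let ?h = "(\<lambda>(y,g). g(v:=y)) :: 'a \<times> ('u \<Rightarrow> 'a) \<Rightarrow> _"
  have fP: "finite ?P" using assms by (intro finite_PiE) auto
  have fX: "finite (X v)" using assms by auto
  have bh: "bij_betw (map_prod ?h id) ((X v \<times> ?P) \<times> Y) (PiE (insert v V) X \<times> Y)"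
    by (intro bij_betw_map_prod bij_ins assms(1) bij_betw_id)
  have "avg (PiE (insert v V) X \<times> Y) (\<lambda>(x,y). K x y)
      = avg ((X v \<times> ?P) \<times> Y) (\<lambda>(p,y). (\<lambda>(a,z). K (z(v:=a)) y) p)"
    by (subst avg_reindex[OF bh]) (auto intro!: avg_cong)
  also have "\<dots> = avg (X v \<times> ?P) (\<lambda>p. avg Y (\<lambda>y. (\<lambda>(a,z). K (z(v:=a)) y) p))"
    using fX fP assms(4) by (intro avg_Times') auto
  also have "\<dots> = avg (X v) (\<lambda>a. avg ?P (\<lambda>z. avg Y (\<lambda>y. K (z(v:=a)) y)))"
    using avg_Times'[OF fX fP, of "\<lambda>a z. avg Y (\<lambda>y. K (z(v:=a)) y)"]
    by (simp add: split_def)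
  also have "\<dots> = avg ?P (\<lambda>z. avg (X v) (\<lambda>a. avg Y (\<lambda>y. K (z(v:=a)) y)))"
    by (rule avg_swap[OF fX fP])
  also have "\<dots> = avg ?P (\<lambda>z. avg Y (\<lambda>y. avg (X v) (\<lambda>a. K (z(v:=a)) y)))"
    using fX assms(4) by (simp add: avg_swap[of "X v" Y])
  also have "\<dots> = avg (?P \<times> Y) (\<lambda>(z,y). avg (X v) (\<lambda>a. K (z(v:=a)) y))"
    by (rule avg_Times'[OF fP assms(4), symmetric])
  finally show ?thesis .
qed

lemma avg_pair_swap:
  assumes "finite A" "finite B"
  shows "avg A (\<lambda>p. avg B (\<lambda>q. H p q)) = avg B (\<lambda>q. avg A (\<lambda>p. H p q))"
  by (rule avg_swap[OF assms])



lemma rbox_empty: "rbox {} X f = f (\<lambda>_. undefined)"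
  unfolding rbox_def by (simp add: avg_def cube_pt_def)

lemma avg_single_times:
  assumes "finite Y" "Y \<noteq> {}"
  shows "avg ({u} \<times> Y) (\<lambda>(x,y). K x) = (K u :: real)"
proof -
  have "avg ({u} \<times> Y) (\<lambda>(x,y). K x) = avg ({u} \<times> Y) (\<lambda>_. K u)"
    by (rule avg_cong) auto
  also have "\<dots> = K u" using assms by (intro avg_const) auto
  finally show ?thesis .
qed

lemma upd_in_PiE: "z \<in> PiE V X \<Longrightarrow> a \<in> X v \<Longrightarrow> z(v:=a) \<in> PiE (insert v V) X"
  by (auto simp: PiE_iff extensional_def)

lemma gcs:
  fixes X :: "'u \<Rightarrow> 'a set" and Y :: "'b set" and f :: "('u \<Rightarrow> 'a) \<Rightarrow> real"
    and g :: "'u \<Rightarrow> ('u \<Rightarrow> 'a) \<Rightarrow> 'b \<Rightarrow> real"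
  assumes "finite V" "\<And>w. w \<in> V \<Longrightarrow> finite (X w) \<and> X w \<noteq> {}" "finite Y" "Y \<noteq> {}"
   "\<And>w x y. w \<in> V \<Longrightarrow> x \<in> PiE V X \<Longrightarrow> y \<in> Y \<Longrightarrow> \<bar>g w x y\<bar> \<le> 1"
   "\<And>w x a y. w \<in> V \<Longrightarrow> x \<in> PiE V X \<Longrightarrow> a \<in> X w \<Longrightarrow> y \<in> Y \<Longrightarrow> g w (x(w:=a)) y = g w x y"
  shows "\<bar>avg (PiE V X \<times> Y) (\<lambda>(x,y). f x * (\<Prod>w\<in>V. g w x y))\<bar> ^ (2 ^ card V) \<le> \<bar>rbox V X f\<bar>"
  using assms
proof (induction V arbitrary: f g rule: finite_induct)
  case empty
  have "avg (PiE {} X \<times> Y) (\<lambda>(x,y). f x * (\<Prod>w\<in>{}. g w x y)) = f (\<lambda>_. undefined)"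
    using avg_single_times[OF empty.prems(2,3), of "\<lambda>_. undefined" f] by simp
  thus ?case by (simp add: rbox_empty)
next
  case (insert v V')
  let ?V = "insert v V'"
  let ?P = "PiE V' X"
  have fX: "finite (X v)" and Xne: "X v \<noteq> {}" using insert.prems(1) by auto
  have fXw: "\<And>w. w \<in> ?V \<Longrightarrow> finite (X w)" using insert.prems(1) by auto
  have fP: "finite ?P" using insert.prems(1) insert.hyps by (intro finite_PiE) auto
  have fY: "finite Y" "Y \<noteq> {}" using insert.prems by auto
  define a0 where "a0 = (SOME a. a \<in> X v)"
  have a0: "a0 \<in> X v" unfolding a0_def using Xne by (simp add: some_in_eq)
  define Gv where "Gv z y = g v (z(v:=a0)) y" for z y
  define Q where "Q z y = avg (X v) (\<lambda>a. f (z(v:=a)) * (\<Prod>w\<in>V'. g w (z(v:=a)) y))" for z y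
  define F where "F a b = (\<lambda>z. f (z(v:=a)) * f (z(v:=b)))" for a b
  define h where "h a b w z y = g w (z(v:=a)) y * g w (z(v:=b)) y" for a b w z y
  define T where "T a b = avg (?P \<times> Y) (\<lambda>(z,y). F a b z * (\<Prod>w\<in>V'. h a b w z y))" for a b
  define E where "E = avg (PiE ?V X \<times> Y) (\<lambda>(x,y). f x * (\<Prod>w\<in>?V. g w x y))"
  have zin: "\<And>z a. z \<in> ?P \<Longrightarrow> a \<in> X v \<Longrightarrow> z(v:=a) \<in> PiE ?V X" by (rule upd_in_PiE)
  have gv: "g v (z(v:=a)) y = Gv z y" if "z \<in> ?P" "a \<in> X v" "y \<in> Y" for z a y
    using insert.prems(5)[OF insertI1 zin[OF that(1) a0] that(2,3)] unfolding Gv_def fun_upd_upd .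
  have E1: "E = avg (?P \<times> Y) (\<lambda>(z,y). Gv z y * Q z y)"
    unfolding E_def
    apply (subst avg_ins_split[OF insert.hyps(2,1) fXw fY(1)], assumption)
    apply (rule avg_cong)
    apply (clarsimp simp: Q_def avg_cmult[symmetric] insert.hyps)
    apply (rule avg_cong)
    apply (simp add: gv)
    done
  have Gv1: "\<bar>Gv z y\<bar> \<le> 1" if "z \<in> ?P" "y \<in> Y" for z y
    unfolding Gv_def using insert.prems(4)[OF insertI1 zin[OF that(1) a0] that(2)] .
  have "E\<^sup>2 = (avg (?P \<times> Y) (\<lambda>p. (\<lambda>(z,y). Gv z y) p * (\<lambda>(z,y). Q z y) p))\<^sup>2"
    unfolding E1 by (simp add: split_def)
  also have "\<dots> \<le> avg (?P \<times> Y) (\<lambda>p. ((\<lambda>(z,y). Gv z y) p)\<^sup>2) * avg (?P \<times> Y) (\<lambda>p. ((\<lambda>(z,y). Q z y) p)\<^sup>2)"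
    by (rule avg_CS)
  also have "\<dots> \<le> avg (?P \<times> Y) (\<lambda>p. ((\<lambda>(z,y). Q z y) p)\<^sup>2)"
  proof (rule mult_left_le_one_le)
    show "0 \<le> avg (?P \<times> Y) (\<lambda>p. ((\<lambda>(z,y). Q z y) p)\<^sup>2)" by (intro avg_nonneg) auto
    show "0 \<le> avg (?P \<times> Y) (\<lambda>p. ((\<lambda>(z,y). Gv z y) p)\<^sup>2)" by (intro avg_nonneg) auto
    show "avg (?P \<times> Y) (\<lambda>p. ((\<lambda>(z,y). Gv z y) p)\<^sup>2) \<le> 1"
      using fP fY Gv1 by (intro avg_le1) (auto simp: abs_square_le_1)
  qed
  also have "\<dots> = avg (?P \<times> Y) (\<lambda>p. avg (X v \<times> X v) (\<lambda>(a,b). (\<lambda>(z,y). F a b z * (\<Prod>w\<in>V'. h a b w z y)) p))"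
  proof (rule avg_cong)
    fix p assume "p \<in> ?P \<times> Y"
    then obtain z y where p: "p = (z,y)" "z \<in> ?P" "y \<in> Y" by auto
    have "(Q z y)\<^sup>2 = avg (X v \<times> X v) (\<lambda>(a,b).
        (f (z(v:=a)) * (\<Prod>w\<in>V'. g w (z(v:=a)) y)) * (f (z(v:=b)) * (\<Prod>w\<in>V'. g w (z(v:=b)) y)))"
      unfolding Q_def using avg_square[OF fX, of "\<lambda>a. f (z(v:=a)) * (\<Prod>w\<in>V'. g w (z(v:=a)) y)"]
      by simp
    also have "\<dots> = avg (X v \<times> X v) (\<lambda>(a,b). F a b z * (\<Prod>w\<in>V'. h a b w z y))"
      by (rule avg_cong) (auto simp: F_def h_def prod.distrib)
    finally show "((\<lambda>(z,y). Q z y) p)\<^sup>2 = avg (X v \<times> X v) (\<lambda>(a,b). (\<lambda>(z,y). F a b z * (\<Prod>w\<in>V'. h a b w z y)) p)"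
      using p by simp
  qed
  also have "\<dots> = avg (X v \<times> X v) (\<lambda>q. avg (?P \<times> Y) (\<lambda>p. (\<lambda>(a,b). (\<lambda>(z,y). F a b z * (\<Prod>w\<in>V'. h a b w z y)) p) q))"
    using fP fY fX by (intro avg_swap) auto
  also have "\<dots> = avg (X v \<times> X v) (\<lambda>(a,b). T a b)"
    unfolding T_def by (rule avg_cong) (auto simp: split_def)
  finally have E2: "E\<^sup>2 \<le> avg (X v \<times> X v) (\<lambda>(a,b). T a b)" .
  have IH: "\<bar>T a b\<bar> ^ (2 ^ card V') \<le> \<bar>rbox V' X (F a b)\<bar>" if ab: "a \<in> X v" "b \<in> X v" for a b
    unfolding T_def
  proof (rule insert.IH)
    show "\<And>w. w \<in> V' \<Longrightarrow> finite (X w) \<and> X w \<noteq> {}" using insert.prems(1) by auto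
    show "finite Y" "Y \<noteq> {}" by fact+
    show "\<bar>h a b w z y\<bar> \<le> 1" if "w \<in> V'" "z \<in> ?P" "y \<in> Y" for w z y
      unfolding h_def abs_mult
      by (rule mult_le_one[OF insert.prems(4)[OF insertI2[OF that(1)] zin[OF that(2) ab(1)] that(3)]
        abs_ge_zero insert.prems(4)[OF insertI2[OF that(1)] zin[OF that(2) ab(2)] that(3)]])
    show "h a b w (z(w:=c)) y = h a b w z y" if "w \<in> V'" "z \<in> ?P" "c \<in> X w" "y \<in> Y" for w z c y
    proof -
      have wv: "w \<noteq> v" using that(1) insert.hyps(2) by auto
      have "z(w:=c, v:=a) = (z(v:=a))(w:=c)" "z(w:=c, v:=b) = (z(v:=b))(w:=c)"
        using wv by (auto simp: fun_upd_twist)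
      moreover note insert.prems(5)[OF insertI2[OF that(1)] zin[OF that(2) ab(1)] that(3,4)]
        insert.prems(5)[OF insertI2[OF that(1)] zin[OF that(2) ab(2)] that(3,4)]
      ultimately show ?thesis unfolding h_def by (simp only:)
    qed
  qed
  have rins: "rbox ?V X f = avg (X v \<times> X v) (\<lambda>(a,b). rbox V' X (F a b))"
    using rbox_insert[OF insert.hyps(2,1) fXw, where f=f] by (simp add: F_def)
  have cardV: "card ?V = Suc (card V')" using insert.hyps by simp
  have E0: "\<bar>E\<bar> ^ (2 ^ card ?V) = (E\<^sup>2) ^ (2 ^ card V')"
    unfolding cardV by (simp add: power_mult[symmetric] power_even_abs mult.commute)
  show ?case
  proof (cases "V' = {}")
    case True
    have "T a b = rbox V' X (F a b)" for a b
      unfolding T_def True rbox_empty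
      using avg_single_times[OF fY, of "\<lambda>_. undefined" "F a b"] by simp
    hence "\<bar>E\<bar> ^ (2 ^ card ?V) \<le> rbox ?V X f"
      using E0 E2 rins True by simp
    thus ?thesis unfolding E_def by simp
  next
    case False
    have "\<bar>E\<bar> ^ (2 ^ card ?V) \<le> \<bar>avg (X v \<times> X v) (\<lambda>(a,b). T a b)\<bar> ^ (2 ^ card V')"
      unfolding E0 using E2 by (intro power_mono) auto
    also have "\<dots> \<le> avg (X v \<times> X v) (\<lambda>p. \<bar>(\<lambda>(a,b). T a b) p\<bar> ^ (2 ^ card V'))"
      using fX by (intro avg_pow_le) auto
    also have "\<dots> \<le> avg (X v \<times> X v) (\<lambda>(a,b). rbox V' X (F a b))"
    proof (rule avg_mono)
      fix p assume "p \<in> X v \<times> X v"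
      then obtain a b where p: "p = (a,b)" "a \<in> X v" "b \<in> X v" by auto
      have "0 \<le> rbox V' X (F a b)"
        using False insert.hyps fXw by (intro rbox_nonneg) auto
      thus "\<bar>(\<lambda>(a,b). T a b) p\<bar> ^ (2 ^ card V') \<le> (\<lambda>(a,b). rbox V' X (F a b)) p"
        using IH[OF p(2,3)] p(1) by simp
    qed
    also have "\<dots> = rbox ?V X f" using rins by simp
    finally show ?thesis unfolding E_def by simp
  qed
qed



lemma avg_of_real: "avg A (\<lambda>x. complex_of_real (f x)) = complex_of_real (avg A f)"
  by (simp add: avg_def)

lemma conj_pow_real: "conj_pow n (complex_of_real r) = complex_of_real r"
  by (simp add: conj_pow_def complex_eq_iff)

lemma box_avg_real: "box_avg V X (\<lambda>y. complex_of_real (\<phi> y)) = complex_of_real (rbox V X \<phi>)"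
  unfolding box_avg_def rbox_def
  by (simp add: conj_pow_real avg_of_real[symmetric] split_def)

lemma box_norm_real: "box_norm V X (\<lambda>y. complex_of_real (\<phi> y)) = \<bar>rbox V X \<phi>\<bar> powr (1 / 2 ^ card V)"
  unfolding box_norm_def box_avg_real by simp

lemma root_le:
  fixes e r :: real
  assumes "0 \<le> e" "e ^ (2^n) \<le> r"
  shows "e \<le> r powr (1 / 2^n)"
proof (cases "e = 0")
  case True thus ?thesis by simp
next
  case False
  hence "e > 0" using assms by simp
  have "e = (e ^ (2^n)) powr (1 / 2^n)"
    using \<open>e > 0\<close> by (simp add: powr_realpow[symmetric] powr_powr)
  also have "\<dots> \<le> r powr (1 / 2^n)"
    using assms by (intro powr_mono2) auto
  finally show ?thesis .
qed

definition merge :: "'u set \<Rightarrow> ('u \<Rightarrow> 'a) \<Rightarrow> ('u \<Rightarrow> 'a) \<Rightarrow> ('u \<Rightarrow> 'a)" where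
  "merge V x y = (\<lambda>u. if u \<in> V then x u else y u)"

lemma bij_merge:
  assumes "V \<subseteq> U"
  shows "bij_betw (\<lambda>(x,y). merge V x y) (PiE V X \<times> PiE (U - V) X) (PiE U X)"
proof (rule bij_betw_byWitness[where f' = "\<lambda>x. (restrict x V, restrict x (U - V))"])
  show "\<forall>a\<in>PiE V X \<times> PiE (U - V) X. (\<lambda>x. (restrict x V, restrict x (U - V))) ((\<lambda>(x,y). merge V x y) a) = a"
    by (auto simp: merge_def fun_eq_iff PiE_iff extensional_def restrict_def)
  show "\<forall>a'\<in>PiE U X. (\<lambda>(x,y). merge V x y) ((\<lambda>x. (restrict x V, restrict x (U - V))) a') = a'"
    using assms by (auto simp: merge_def fun_eq_iff PiE_iff extensional_def restrict_def)
  show "(\<lambda>(x,y). merge V x y) ` (PiE V X \<times> PiE (U - V) X) \<subseteq> PiE U X"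
    using assms by (auto simp: merge_def PiE_iff extensional_def)
  show "(\<lambda>x. (restrict x V, restrict x (U - V))) ` PiE U X \<subseteq> PiE V X \<times> PiE (U - V) X"
    using assms by (auto simp: PiE_iff)
qed



lemma term_bound:
  fixes U :: "'u set" and X :: "'u \<Rightarrow> 'a set" and S :: "'u set \<Rightarrow> ('u \<Rightarrow> 'a) set"
    and \<phi> :: "('u \<Rightarrow> 'a) \<Rightarrow> real"
  assumes U: "finite U" and X: "\<And>u. u \<in> U \<Longrightarrow> finite (X u) \<and> X u \<noteq> {}"
   and V0: "V0 \<subseteq> U" and R: "finite R" "\<And>V. V \<in> R \<Longrightarrow> \<not> V0 \<subseteq> V"
  shows "\<bar>avg (PiE U X) (\<lambda>x. \<phi> (restrict x V0) * (\<Prod>V\<in>R. (indicator (S V) (restrict x V) :: real)))\<bar>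
     \<le> \<bar>rbox V0 X \<phi>\<bar> powr (1 / 2^card V0)"
proof -
  define c where "c V = (SOME u. u \<in> V0 \<and> u \<notin> V)" for V
  have c: "c V \<in> V0 \<and> c V \<notin> V" if "V \<in> R" for V
  proof -
    have "\<exists>u. u \<in> V0 \<and> u \<notin> V" using R(2)[OF that] by auto
    thus ?thesis unfolding c_def by (rule someI_ex)
  qed
  define Y where "Y = PiE (U - V0) X"
  define g where "g w x y = (\<Prod>V\<in>{V\<in>R. c V = w}. (indicator (S V) (restrict (merge V0 x y) V) :: real))"
    for w x y
  have fV0: "finite V0" using V0 U finite_subset by auto
  have fY: "finite Y" unfolding Y_def using U X by (intro finite_PiE) auto
  have neY: "Y \<noteq> {}" unfolding Y_def using X by (auto simp: PiE_eq_empty_iff)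
  have "avg (PiE U X) (\<lambda>x. \<phi> (restrict x V0) * (\<Prod>V\<in>R. (indicator (S V) (restrict x V) :: real)))
      = avg (PiE V0 X \<times> Y) (\<lambda>(x,y). \<phi> x * (\<Prod>w\<in>V0. g w x y))"
    unfolding Y_def
  proof (subst avg_reindex[OF bij_merge[OF V0]], rule avg_cong)
    fix p assume "p \<in> PiE V0 X \<times> PiE (U - V0) X"
    then obtain x y where p: "p = (x,y)" "x \<in> PiE V0 X" by auto
    have r: "restrict (merge V0 x y) V0 = x"
    proof (rule ext)
      fix u show "restrict (merge V0 x y) V0 u = x u"
        using p(2) by (cases "u \<in> V0") (simp_all add: restrict_def merge_def PiE_arb[of x V0 X u])
    qed
    have "(\<Prod>w\<in>V0. g w x y) = (\<Prod>V\<in>R. (indicator (S V) (restrict (merge V0 x y) V) :: real))"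
      unfolding g_def using c by (intro prod.group[OF R(1) fV0]) auto
    thus "\<phi> (restrict ((\<lambda>(x,y). merge V0 x y) p) V0) *
          (\<Prod>V\<in>R. indicator (S V) (restrict ((\<lambda>(x,y). merge V0 x y) p) V)) =
          (\<lambda>(x,y). \<phi> x * (\<Prod>w\<in>V0. g w x y)) p"
      using p r by simp
  qed
  moreover have "\<bar>avg (PiE V0 X \<times> Y) (\<lambda>(x,y). \<phi> x * (\<Prod>w\<in>V0. g w x y))\<bar> ^ (2 ^ card V0) \<le> \<bar>rbox V0 X \<phi>\<bar>"
  proof (rule gcs[OF fV0 _ fY neY])
    show "\<And>w. w \<in> V0 \<Longrightarrow> finite (X w) \<and> X w \<noteq> {}" using X V0 by auto
    show "\<bar>g w x y\<bar> \<le> 1" for w x y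
    proof -
      have "0 \<le> g w x y" unfolding g_def by (intro prod_nonneg) auto
      moreover have "g w x y \<le> 1" unfolding g_def by (intro prod_le_1) auto
      ultimately show ?thesis by simp
    qed
    show "g w (x(w:=a)) y = g w x y" if "w \<in> V0" for w x a y
      unfolding g_def
    proof (rule prod.cong[OF refl])
      fix V assume "V \<in> {V\<in>R. c V = w}"
      hence "w \<notin> V" using c by auto
      hence "restrict (merge V0 (x(w:=a)) y) V = restrict (merge V0 x y) V"
        by (auto simp: restrict_def merge_def fun_eq_iff)
      thus "(indicator (S V) (restrict (merge V0 (x(w:=a)) y) V) :: real) = indicator (S V) (restrict (merge V0 x y) V)"
        by simp
    qed
  qed
  ultimately show ?thesis
    by (intro root_le) auto
qed



lemma main_ind:
  fixes U :: "'u set" and X :: "'u \<Rightarrow> 'a set" and S :: "'u set \<Rightarrow> ('u \<Rightarrow> 'a) set"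
  assumes U: "finite U" and X: "\<And>u. u \<in> U \<Longrightarrow> finite (X u) \<and> X u \<noteq> {}"
    and G: "finite G"
  shows "(\<forall>V\<in>G. V \<subseteq> U) \<longrightarrow>
    \<bar>avg (PiE U X) (\<lambda>x. \<Prod>V\<in>G. (indicator (S V) (restrict x V) :: real))
          - (\<Prod>V\<in>G. avg (PiE V X) (indicator (S V)))\<bar>
     \<le> (\<Sum>V\<in>G. box_norm V X
              (\<lambda>y. complex_of_real (indicator (S V) y - avg (PiE V X) (indicator (S V)))))"
  using G
proof (induction G rule: finite_remove_induct)
  case empty
  have "finite (PiE U X)" "PiE U X \<noteq> {}" using U X
    by (auto intro!: finite_PiE simp: PiE_eq_empty_iff)
  thus ?case by (simp add: avg_const)
next
  case (remove G)
  show ?case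
  proof
    assume GU: "\<forall>V\<in>G. V \<subseteq> U"
    have "Max (card ` G) \<in> card ` G" using remove.hyps(1,2) by (intro Max_in) auto
    then obtain V0 where V0: "V0 \<in> G" "card V0 = Max (card ` G)" by auto
    have cle: "card V \<le> card V0" if "V \<in> G" for V
      using V0(2) remove.hyps(1) that by simp
    define R where "R = G - {V0}"
    have fR: "finite R" using remove.hyps(1) by (simp add: R_def)
    have V0U: "V0 \<subseteq> U" using GU V0 by auto
    have nsub: "\<not> V0 \<subseteq> V" if "V \<in> R" for V
    proof
      assume "V0 \<subseteq> V"
      moreover have "V \<subseteq> U" using GU that by (auto simp: R_def)
      hence "finite V" using U by (rule finite_subset)
      moreover have "card V \<le> card V0" using cle that by (auto simp: R_def)
      ultimately have "V0 = V" using card_subset_eq card_mono by (metis le_antisym)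
      thus False using that by (simp add: R_def)
    qed
    define d where "d V = (avg (PiE V X) (indicator (S V)) :: real)" for V
    define \<phi> where "\<phi> y = (indicator (S V0) y :: real) - d V0" for y
    define bn where "bn V = box_norm V X
              (\<lambda>y. complex_of_real (indicator (S V) y - avg (PiE V X) (indicator (S V))))" for V
    define A1 where "A1 = avg (PiE U X) (\<lambda>x. \<phi> (restrict x V0) * (\<Prod>V\<in>R. (indicator (S V) (restrict x V) :: real)))"
    define D where "D = avg (PiE U X) (\<lambda>x. \<Prod>V\<in>R. (indicator (S V) (restrict x V) :: real)) - (\<Prod>V\<in>R. d V)"
    have fPV0: "finite (PiE V0 X)" using V0U X by (intro finite_PiE) (auto intro: finite_subset[OF V0U U])
    have d01: "0 \<le> d V0" "d V0 \<le> 1" unfolding d_def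
      by (auto intro!: avg_nonneg avg_le1 fPV0)
    have split: "avg (PiE U X) (\<lambda>x. \<Prod>V\<in>G. (indicator (S V) (restrict x V) :: real)) - (\<Prod>V\<in>G. d V)
        = A1 + d V0 * D"
    proof -
      have "avg (PiE U X) (\<lambda>x. \<Prod>V\<in>G. (indicator (S V) (restrict x V) :: real))
          = avg (PiE U X) (\<lambda>x. \<phi> (restrict x V0) * (\<Prod>V\<in>R. (indicator (S V) (restrict x V) :: real))
              + d V0 * (\<Prod>V\<in>R. (indicator (S V) (restrict x V) :: real)))"
        by (rule avg_cong) (simp add: prod.remove[OF remove.hyps(1) V0(1)] R_def \<phi>_def algebra_simps)
      also have "\<dots> = A1 + d V0 * avg (PiE U X) (\<lambda>x. \<Prod>V\<in>R. (indicator (S V) (restrict x V) :: real))"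
        unfolding A1_def by (simp add: avg_add avg_cmult)
      finally show ?thesis
        unfolding D_def by (simp add: prod.remove[OF remove.hyps(1) V0(1)] R_def algebra_simps)
    qed
    have "\<bar>A1\<bar> \<le> \<bar>rbox V0 X \<phi>\<bar> powr (1 / 2^card V0)"
      unfolding A1_def by (rule term_bound[OF U X V0U fR nsub]) auto
    also have "\<dots> = bn V0"
      unfolding bn_def box_norm_real[symmetric] \<phi>_def d_def by simp
    finally have A1b: "\<bar>A1\<bar> \<le> bn V0" .
    have GU': "\<forall>V\<in>G - {V0}. V \<subseteq> U" using GU by auto
    have IH: "\<bar>D\<bar> \<le> (\<Sum>V\<in>R. bn V)"
      unfolding D_def d_def bn_def R_def by (rule mp[OF remove.IH[OF V0(1)] GU'])
    have "\<bar>d V0 * D\<bar> \<le> \<bar>D\<bar>" using d01 by (simp add: abs_mult mult_left_le_one_le)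
    hence "\<bar>A1 + d V0 * D\<bar> \<le> bn V0 + (\<Sum>V\<in>R. bn V)" using A1b IH by linarith
    also have "\<dots> = (\<Sum>V\<in>G. bn V)"
      unfolding R_def by (simp add: sum.remove[OF remove.hyps(1) V0(1)])
    finally show "\<bar>avg (PiE U X) (\<lambda>x. \<Prod>V\<in>G. (indicator (S V) (restrict x V) :: real))
          - (\<Prod>V\<in>G. avg (PiE V X) (indicator (S V)))\<bar>
     \<le> (\<Sum>V\<in>G. box_norm V X
              (\<lambda>y. complex_of_real (indicator (S V) y - avg (PiE V X) (indicator (S V)))))"
      using split unfolding d_def bn_def by simp
  qed
qed



theorem lemma4p6:
  fixes U :: "'u set" and X :: "'u \<Rightarrow> 'a set" and S :: "'u set \<Rightarrow> ('u \<Rightarrow> 'a) set"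
    and k :: nat
  assumes "finite U"
    and "\<And>u. u \<in> U \<Longrightarrow> finite (X u) \<and> X u \<noteq> {}"
    and "\<And>V. V \<subseteq> U \<Longrightarrow> S V \<subseteq> PiE V X"
    and "k \<le> card U"
  shows "\<bar>avg (PiE U X) (\<lambda>x. \<Prod>V\<in>{V. V \<subseteq> U \<and> card V \<le> k}. indicator (S V) (restrict x V))
          - (\<Prod>V\<in>{V. V \<subseteq> U \<and> card V \<le> k}. avg (PiE V X) (indicator (S V)))\<bar>
         \<le> 2 ^ card U * Max ((\<lambda>V. box_norm V X
              (\<lambda>y. complex_of_real (indicator (S V) y - avg (PiE V X) (indicator (S V)))))
            ` {V. V \<subseteq> U \<and> card V \<le> k})"
proof -
  let ?F = "{V. V \<subseteq> U \<and> card V \<le> k}"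
  define bn where "bn V = box_norm V X
              (\<lambda>y. complex_of_real (indicator (S V) y - avg (PiE V X) (indicator (S V))))" for V
  have FP: "?F \<subseteq> Pow U" by auto
  have fF: "finite ?F" using FP assms(1) finite_subset by blast
  have "{} \<in> ?F" by simp
  have main: "\<bar>avg (PiE U X) (\<lambda>x. \<Prod>V\<in>?F. (indicator (S V) (restrict x V) :: real))
          - (\<Prod>V\<in>?F. avg (PiE V X) (indicator (S V)))\<bar> \<le> (\<Sum>V\<in>?F. bn V)"
    using main_ind[OF assms(1,2) fF, where S=S] unfolding bn_def by auto
  have bn0: "0 \<le> bn V" for V unfolding bn_def box_norm_def by simp
  have "(\<Sum>V\<in>?F. bn V) \<le> of_nat (card ?F) * Max (bn ` ?F)"
    using fF by (intro sum_bounded_above Max_ge) auto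
  also have "\<dots> \<le> 2 ^ card U * Max (bn ` ?F)"
  proof (rule mult_right_mono)
    have "card ?F \<le> card (Pow U)" using FP assms(1) by (intro card_mono) auto
    hence "card ?F \<le> 2 ^ card U" using assms(1) by (simp add: card_Pow)
    thus "real (card ?F) \<le> 2 ^ card U" by (metis of_nat_le_iff of_nat_numeral of_nat_power)
    show "0 \<le> Max (bn ` ?F)"
      using fF \<open>{} \<in> ?F\<close> bn0 by (meson Max_ge finite_imageI imageI order_trans)
  qed
  finally show ?thesis using main unfolding bn_def by simp
qed


end
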